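(* Let $H$, $G$, $R$ be finite simple connected graphs such that $H$ is an induced subgraph of $G$ and $G$ is an induced subgraph of $R$, with $\mathrm{diam}(H)=\mathrm{diam}(G)=2$. If $\beta(R)=n(R)-t$ and $\beta(H)=n(H)-t$ for some positive integer $t$, then $\beta(G)=n(G)-t$.
   Context: $n(X)$ denotes the number of vertices of a graph $X$. For an ordered set $W=\{w_1,\dots,w_k\}$ of vertices of a connected graph $X$, $r(v|W)=(d_X(v,w_1),\dots,d_X(v,w_k))$ with $d_X$ the shortest-path distance; $W$ is a resolving set if distinct vertices have distinct vectors $r(\cdot|W)$, and $\beta(X)$, the metric dimension, is the minimum size of a resolving set. *)

theory Defs
  imports Main
begin

definition simple_graph :: "'a set \<Rightarrow> ('a \<Rightarrow> 'a \<Rightarrow> bool) \<Rightarrow> bool" where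
  "simple_graph V E \<longleftrightarrow> finite V \<and> (\<forall>u v. E u v \<longrightarrow> E v u) \<and> (\<forall>v. \<not> E v v)
     \<and> (\<forall>u v. E u v \<longrightarrow> u \<in> V \<and> v \<in> V)"

definition induced_subgraph :: "'a set \<Rightarrow> ('a \<Rightarrow> 'a \<Rightarrow> bool) \<Rightarrow> 'a set \<Rightarrow> ('a \<Rightarrow> 'a \<Rightarrow> bool) \<Rightarrow> bool" where
  "induced_subgraph V' E' V E \<longleftrightarrow> V' \<subseteq> V \<and> (\<forall>u v. E' u v \<longleftrightarrow> (u \<in> V' \<and> v \<in> V' \<and> E u v))"

definition walk :: "'a set \<Rightarrow> ('a \<Rightarrow> 'a \<Rightarrow> bool) \<Rightarrow> 'a list \<Rightarrow> bool" where
  "walk V E xs \<longleftrightarrow> xs \<noteq> [] \<and> set xs \<subseteq> V \<and> (\<forall>i. Suc i < length xs \<longrightarrow> E (xs ! i) (xs ! Suc i))"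

definition reachable_in :: "'a set \<Rightarrow> ('a \<Rightarrow> 'a \<Rightarrow> bool) \<Rightarrow> nat \<Rightarrow> 'a \<Rightarrow> 'a \<Rightarrow> bool" where
  "reachable_in V E n u v \<longleftrightarrow> (\<exists>xs. walk V E xs \<and> hd xs = u \<and> last xs = v \<and> length xs = Suc n)"

definition connected_graph :: "'a set \<Rightarrow> ('a \<Rightarrow> 'a \<Rightarrow> bool) \<Rightarrow> bool" where
  "connected_graph V E \<longleftrightarrow> V \<noteq> {} \<and> (\<forall>u\<in>V. \<forall>v\<in>V. \<exists>n. reachable_in V E n u v)"

definition gdist :: "'a set \<Rightarrow> ('a \<Rightarrow> 'a \<Rightarrow> bool) \<Rightarrow> 'a \<Rightarrow> 'a \<Rightarrow> nat" where
  "gdist V E u v = (LEAST n. reachable_in V E n u v)"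

definition diameter :: "'a set \<Rightarrow> ('a \<Rightarrow> 'a \<Rightarrow> bool) \<Rightarrow> nat" where
  "diameter V E = Max {gdist V E u v | u v. u \<in> V \<and> v \<in> V}"

definition resolving_set :: "'a set \<Rightarrow> ('a \<Rightarrow> 'a \<Rightarrow> bool) \<Rightarrow> 'a set \<Rightarrow> bool" where
  "resolving_set V E W \<longleftrightarrow> W \<subseteq> V \<and>
     (\<forall>u\<in>V. \<forall>v\<in>V. (\<forall>w\<in>W. gdist V E u w = gdist V E v w) \<longrightarrow> u = v)"

definition metric_dim :: "'a set \<Rightarrow> ('a \<Rightarrow> 'a \<Rightarrow> bool) \<Rightarrow> nat" where
  "metric_dim V E = (LEAST k. \<exists>W. resolving_set V E W \<and> card W = k)"

end

theory Submission
  imports Defs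
begin

lemma reach0: "reachable_in V E 0 u v \<Longrightarrow> u = v"
  unfolding reachable_in_def
  by (metis hd_conv_nth last_conv_nth length_0_conv nat.distinct(1) diff_Suc_1)

lemma reach0I: "u \<in> V \<Longrightarrow> reachable_in V E 0 u u"
  unfolding reachable_in_def walk_def by (rule exI[of _ "[u]"]) auto

lemma reach1: "reachable_in V E 1 u v \<Longrightarrow> E u v"
proof -
  assume "reachable_in V E 1 u v"
  then obtain xs where w: "walk V E xs" "hd xs = u" "last xs = v" "length xs = 2"
    unfolding reachable_in_def by auto
  then have "E (xs!0) (xs!1)" unfolding walk_def by auto
  moreover have "xs!0 = u" using w by (metis hd_conv_nth list.size(3) zero_neq_numeral)
  moreover have "xs!1 = v"
  proof -
    have "xs \<noteq> []" using w(4) by auto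
    then have "last xs = xs ! (length xs - 1)" by (rule last_conv_nth)
    then show ?thesis using w by simp
  qed
  ultimately show ?thesis by simp
qed

lemma reach1I: "E u v \<Longrightarrow> u \<in> V \<Longrightarrow> v \<in> V \<Longrightarrow> reachable_in V E 1 u v"
  unfolding reachable_in_def walk_def
  by (rule exI[of _ "[u,v]"]) (auto simp: less_Suc_eq)

lemma reach_mono:
  assumes "induced_subgraph V' E' V E" "reachable_in V' E' n u v"
  shows "reachable_in V E n u v"
  using assms unfolding induced_subgraph_def reachable_in_def walk_def by blast

lemma gdist_reach:
  assumes "connected_graph V E" "u \<in> V" "v \<in> V"
  shows "reachable_in V E (gdist V E u v) u v"
  using assms unfolding connected_graph_def gdist_def by (meson LeastI_ex)

lemma gdist_le: "reachable_in V E n u v \<Longrightarrow> gdist V E u v \<le> n"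
  unfolding gdist_def by (rule Least_le)

lemma gdist_diam:
  assumes "simple_graph V E" "u \<in> V" "v \<in> V"
  shows "gdist V E u v \<le> diameter V E"
proof -
  have "{gdist V E u v | u v. u \<in> V \<and> v \<in> V} = (\<lambda>(u,v). gdist V E u v) ` (V \<times> V)" by auto
  moreover have "finite V" using assms(1) unfolding simple_graph_def by simp
  ultimately have "finite {gdist V E u v | u v. u \<in> V \<and> v \<in> V}" by simp
  then show ?thesis unfolding diameter_def using assms by (intro Max_ge) auto
qed

lemma key:
  assumes ind: "induced_subgraph V' E' V E" and c: "connected_graph V E" and c': "connected_graph V' E'"
    and s': "simple_graph V' E'" and d: "diameter V' E' = 2" and u: "u \<in> V'" and w: "w \<in> V'"
  shows "gdist V E u w = gdist V' E' u w"
proof -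
  have VV: "V' \<subseteq> V" using ind unfolding induced_subgraph_def by auto
  define a where "a = gdist V E u w"
  define b where "b = gdist V' E' u w"
  have b2: "b \<le> 2" using gdist_diam[OF s' u w] d b_def by simp
  have rb: "reachable_in V' E' b u w" using gdist_reach[OF c' u w] b_def by simp
  have ra: "reachable_in V E a u w" using gdist_reach[OF c] u w VV a_def by auto
  have ab: "a \<le> b" using gdist_le[OF reach_mono[OF ind rb]] a_def by simp
  show ?thesis
  proof (cases "a = 0")
    case True
    then have "u = w" using ra reach0 by metis
    then have "b = 0" using gdist_le[OF reach0I[OF u]] b_def by simp
    then show ?thesis using True a_def b_def by simp
  next
    case False
    show ?thesis
    proof (cases "a = 1")
      case True
      then have "E u w" using ra reach1 by metis
      then have "E' u w" using ind u w unfolding induced_subgraph_def by auto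
      then have "b \<le> 1" using gdist_le[OF reach1I[OF _ u w]] b_def by simp
      moreover have "b \<noteq> 0" using ab False by simp
      ultimately show ?thesis using True a_def b_def by simp
    next
      case False2: False
      then show ?thesis using False ab b2 a_def b_def by simp
    qed
  qed
qed

lemma resolving_exists:
  assumes "connected_graph V E"
  shows "resolving_set V E V"
  unfolding resolving_set_def
proof (intro conjI ballI impI)
  fix u v assume uv: "u \<in> V" "v \<in> V" "\<forall>w\<in>V. gdist V E u w = gdist V E v w"
  then have "gdist V E v u = 0" using gdist_le[OF reach0I[OF uv(1)]] by (metis le_zero_eq)
  then show "u = v" using gdist_reach[OF assms uv(2) uv(1)] reach0 by metis
qed simp

lemma main:
  assumes s: "simple_graph V E" and s': "simple_graph V' E'"
    and c: "connected_graph V E" and c': "connected_graph V' E'"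
    and ind: "induced_subgraph V' E' V E" and d: "diameter V' E' = 2"
  shows "metric_dim V E \<le> metric_dim V' E' + card (V - V')"
proof -
  have VV: "V' \<subseteq> V" using ind unfolding induced_subgraph_def by auto
  have fin: "finite V" using s unfolding simple_graph_def by simp
  have "\<exists>W. resolving_set V' E' W \<and> card W = metric_dim V' E'"
    unfolding metric_dim_def
    by (rule LeastI[of _ "card V'"]) (use resolving_exists[OF c'] in blast)
  then obtain W' where W': "resolving_set V' E' W'" "card W' = metric_dim V' E'" by blast
  define W where "W = W' \<union> (V - V')"
  have W'sub: "W' \<subseteq> V'" using W' unfolding resolving_set_def by auto
  have res: "resolving_set V E W"
    unfolding resolving_set_def
  proof (intro conjI ballI impI)
    show "W \<subseteq> V" using W'sub VV W_def by auto
  next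
    fix u v assume uv: "u \<in> V" "v \<in> V" "\<forall>w\<in>W. gdist V E u w = gdist V E v w"
    have zero: "x = y" if "x \<in> V" "y \<in> V" "y \<in> W" "gdist V E x y = gdist V E y y" for x y
    proof -
      have "gdist V E x y = 0" using that gdist_le[OF reach0I[OF that(2)]] by simp
      then show ?thesis using gdist_reach[OF c that(1) that(2)] reach0 by metis
    qed
    show "u = v"
    proof (cases "u \<in> V' \<and> v \<in> V'")
      case True
      have "\<forall>w\<in>W'. gdist V' E' u w = gdist V' E' v w"
      proof
        fix w assume "w \<in> W'"
        then have "w \<in> V'" "w \<in> W" using W'sub W_def by auto
        then show "gdist V' E' u w = gdist V' E' v w"
          using uv(3) key[OF ind c c' s' d] True by metis
      qed
      then show ?thesis using W'(1) True unfolding resolving_set_def by blast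
    next
      case False
      then have "u \<notin> V' \<or> v \<notin> V'" by blast
      then show ?thesis
      proof
        assume "u \<notin> V'"
        then have "u \<in> W" using uv W_def by auto
        then show ?thesis using zero[OF uv(2) uv(1)] uv(3) by auto
      next
        assume "v \<notin> V'"
        then have "v \<in> W" using uv W_def by auto
        then show ?thesis using zero[OF uv(1) uv(2)] uv(3) by auto
      qed
    qed
  qed
  have "metric_dim V E \<le> card W" unfolding metric_dim_def by (rule Least_le) (use res in blast)
  also have "\<dots> \<le> card W' + card (V - V')" unfolding W_def by (rule card_Un_le)
  finally show ?thesis using W' by simp
qed

theorem corollary2p7:
  fixes VH VG VR :: "'a set" and EH EG ER :: "'a \<Rightarrow> 'a \<Rightarrow> bool" and t :: nat
  assumes "simple_graph VH EH" and "simple_graph VG EG" and "simple_graph VR ER"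
    and "connected_graph VH EH" and "connected_graph VG EG" and "connected_graph VR ER"
    and "induced_subgraph VH EH VG EG" and "induced_subgraph VG EG VR ER"
    and "diameter VH EH = 2" and "diameter VG EG = 2"
    and "t > 0"
    and "int (metric_dim VR ER) = int (card VR) - int t"
    and "int (metric_dim VH EH) = int (card VH) - int t"
  shows "int (metric_dim VG EG) = int (card VG) - int t"
proof -
  have 1: "metric_dim VG EG \<le> metric_dim VH EH + card (VG - VH)"
    using main[OF assms(2,1,5,4,7,9)] .
  have 2: "metric_dim VR ER \<le> metric_dim VG EG + card (VR - VG)"
    using main[OF assms(3,2,6,5,8,10)] .
  have "VH \<subseteq> VG" "VG \<subseteq> VR" using assms(7,8) unfolding induced_subgraph_def by auto
  moreover have "finite VG" "finite VR" using assms(2,3) unfolding simple_graph_def by auto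
  ultimately have "card (VG - VH) = card VG - card VH" "card (VR - VG) = card VR - card VG"
    "card VH \<le> card VG" "card VG \<le> card VR"
    by (meson card_Diff_subset card_mono finite_subset)+
  then show ?thesis using 1 2 assms(12,13) by linarith
qed

end
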